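(* Let $\kappa$ be an uncountable cardinal with $\kappa=\kappa^{<\kappa}$. Then there is a sequence $\langle A_\gamma\subseteq{}^\kappa\kappa : \gamma<2^\kappa\rangle$ of pairwise disjoint sets, each of which is the image of ${}^\kappa\kappa$ under a continuous injective function ${}^\kappa\kappa\to{}^\kappa\kappa$, such that for all $\gamma<\delta<2^\kappa$ the sets $A_\gamma$ and $A_\delta$ cannot be separated by a set with the $\kappa$-Baire property, i.e. there is no $X\subseteq{}^\kappa\kappa$ with the $\kappa$-Baire property such that $A_\gamma\subseteq X\subseteq{}^\kappa\kappa\setminus A_\delta$.
   Context: ${}^\kappa\kappa$ is the set of functions $\kappa\to\kappa$, with the topology whose basic open sets are $N_s=\{x\in{}^\kappa\kappa : s\subseteq x\}$ for $s$ a function from some ordinal $\alpha<\kappa$ to $\kappa$. A subset $A$ of ${}^\kappa\kappa$ has the $\kappa$-Baire property if there is an open set $U\subseteq{}^\kappa\kappa$ and a sequence $\langle N_\alpha:\alpha<\kappa\rangle$ of nowhere dense subsets of ${}^\kappa\kappa$ such that the symmetric difference of $A$ and $U$ is contained in $\bigcup_{\alpha<\kappa}N_\alpha$. *)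

theory Defs
  imports "HOL-Analysis.Analysis" "HOL-Library.FuncSet"
begin

text \<open>The cardinal kappa is represented by a type 'k together with a cardinal
  well-order r on it (card_order r).  Ordinals alpha < kappa are elements of 'k,
  and the ordinal alpha itself is the set underS r alpha of its predecessors.\<close>

definition basic_nbhd :: "'k rel \<Rightarrow> 'k \<Rightarrow> ('k \<Rightarrow> 'k) \<Rightarrow> ('k \<Rightarrow> 'k) set" where
  "basic_nbhd r \<alpha> s = {x. \<forall>\<beta>\<in>underS r \<alpha>. x \<beta> = s \<beta>}"

definition kappa_top :: "'k rel \<Rightarrow> ('k \<Rightarrow> 'k) topology" where
  "kappa_top r = topology_generated_by {basic_nbhd r \<alpha> s | \<alpha> s. True}"

definition nowhere_dense_in :: "'a topology \<Rightarrow> 'a set \<Rightarrow> bool" where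
  "nowhere_dense_in T N \<longleftrightarrow> T interior_of (T closure_of N) = {}"

definition kappa_Baire :: "'k rel \<Rightarrow> ('k \<Rightarrow> 'k) set \<Rightarrow> bool" where
  "kappa_Baire r A \<longleftrightarrow>
     (\<exists>U N. openin (kappa_top r) U \<and> (\<forall>\<alpha>::'k. nowhere_dense_in (kappa_top r) (N \<alpha>))
        \<and> (A - U) \<union> (U - A) \<subseteq> (\<Union>\<alpha>. N \<alpha>))"

end

theory Submission imports Defs begin
unbundle cardinal_syntax

locale KS =
  fixes r :: "'k rel"
  assumes co: "card_order r"
    and unc: "\<not> countable (UNIV :: 'k set)"
    and iso: "(card_of (SIGMA \<alpha>:(UNIV::'k set). underS r \<alpha> \<rightarrow>\<^sub>E (UNIV :: 'k set)), r) \<in> ordIso"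
begin

abbreviation le (infix "\<sqsubseteq>" 50) where "a \<sqsubseteq> b \<equiv> (a,b) \<in> r"
abbreviation lt (infix "\<sqsubset>" 50) where "a \<sqsubset> b \<equiv> (a,b) \<in> r \<and> a \<noteq> b"

lemma WO: "well_order_on UNIV r" using co unfolding card_order_on_def by blast
lemma Fld: "Field r = UNIV" using WO well_order_on_Field by blast
lemma refl: "a \<sqsubseteq> a" using WO unfolding well_order_on_def linear_order_on_def partial_order_on_def preorder_on_def refl_on_def by blast
lemma trans: "a \<sqsubseteq> b \<Longrightarrow> b \<sqsubseteq> c \<Longrightarrow> a \<sqsubseteq> c" using WO unfolding well_order_on_def linear_order_on_def partial_order_on_def preorder_on_def trans_def by blast
lemma antisym: "a \<sqsubseteq> b \<Longrightarrow> b \<sqsubseteq> a \<Longrightarrow> a = b" using WO unfolding well_order_on_def linear_order_on_def partial_order_on_def antisym_def by blast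
lemma total: "a \<sqsubseteq> b \<or> b \<sqsubseteq> a" using WO refl unfolding well_order_on_def linear_order_on_def total_on_def by (cases "a = b") auto
lemma wf: "wf (r - Id)" using WO unfolding well_order_on_def by blast

lemma notle: "\<not> a \<sqsubseteq> b \<longleftrightarrow> b \<sqsubset> a" using total antisym refl by blast
lemma lt_le_trans: "a \<sqsubset> b \<Longrightarrow> b \<sqsubseteq> c \<Longrightarrow> a \<sqsubset> c" using trans antisym by blast
lemma le_lt_trans: "a \<sqsubseteq> b \<Longrightarrow> b \<sqsubset> c \<Longrightarrow> a \<sqsubset> c" using trans antisym by blast

lemma underS_iff[simp]: "b \<in> underS r a \<longleftrightarrow> b \<sqsubset> a" unfolding underS_def by auto
lemma under_iff[simp]: "b \<in> under r a \<longleftrightarrow> b \<sqsubseteq> a" unfolding under_def by auto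

definition mn :: "'k set \<Rightarrow> 'k" where "mn A = (SOME a. a \<in> A \<and> (\<forall>b\<in>A. a \<sqsubseteq> b))"

lemma mn_ex: assumes "A \<noteq> {}" shows "\<exists>a. a \<in> A \<and> (\<forall>b\<in>A. a \<sqsubseteq> b)"
proof -
  obtain a where a: "a \<in> A" "\<forall>b. (b,a) \<in> r - Id \<longrightarrow> b \<notin> A" using wf assms by (metis ex_in_conv wfE_min)
  then show ?thesis using total by blast
qed

lemma mn: assumes "A \<noteq> {}" shows "mn A \<in> A" "\<And>b. b \<in> A \<Longrightarrow> mn A \<sqsubseteq> b"
  using someI_ex[OF mn_ex[OF assms]] unfolding mn_def by blast+

lemma mn_I: "a \<in> A \<Longrightarrow> mn A \<sqsubseteq> a" using mn by blast

lemma card_underS: "|underS r a| <o |UNIV :: 'k set|"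
proof -
  have "|underS r a| <o r" using card_of_underS[of r a] co Fld card_order_on_Card_order by blast
  moreover have "r =o |UNIV :: 'k set|" using card_of_unique co by blast
  ultimately show ?thesis using ordLess_ordIso_trans by blast
qed

lemma inf: "infinite (UNIV :: 'k set)" using unc countable_finite by blast

lemma card_under: "|under r a| <o |UNIV :: 'k set|"
proof (cases "finite (under r a)")
  case True then show ?thesis using inf finite_ordLess_infinite[of "|under r a|" "|UNIV::'k set|"] card_of_Well_order Field_card_of by metis
next
  case False
  have "under r a = insert a (underS r a)" using refl by auto
  then have "under r a = underS r a \<union> {a}" by auto
  moreover have "infinite (underS r a)" using False \<open>under r a = insert a (underS r a)\<close> by auto
  ultimately obtain h where "bij_betw h (underS r a) (under r a)" using infinite_imp_bij_betw2 by metis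
  then have "|under r a| =o |underS r a|" using card_of_ordIso ordIso_symmetric by blast
  then show ?thesis using card_underS ordIso_ordLess_trans by blast
qed

lemma small_image_ne: "|A| <o |UNIV :: 'k set| \<Longrightarrow> (f :: 'a \<Rightarrow> 'k) ` A \<noteq> UNIV"
  by (metis card_of_image not_ordLess_ordLeq ordLeq_ordLess_trans)

abbreviation Sig :: "('k \<times> ('k \<Rightarrow> 'k)) set" where
  "Sig \<equiv> SIGMA \<alpha>:(UNIV::'k set). underS r \<alpha> \<rightarrow>\<^sub>E (UNIV :: 'k set)"

definition Fm :: "'k \<Rightarrow> 'k \<times> ('k \<Rightarrow> 'k)" where "Fm = (SOME F. bij_betw F (UNIV::'k set) Sig)"

lemma Fm_bij: "bij_betw Fm UNIV Sig"
proof -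
  have 1: "r =o |UNIV :: 'k set|" using card_of_unique co by blast
  have 2: "|Sig| =o r" using iso .
  have "|UNIV :: 'k set| =o |Sig|" using ordIso_symmetric[OF ordIso_transitive[OF 2 1]] .
  then have "\<exists>F. bij_betw F (UNIV :: 'k set) Sig" by (simp only: card_of_ordIso[symmetric])
  then show ?thesis unfolding Fm_def by (rule someI_ex)
qed

lemma Fm_surj: assumes "h \<in> underS r \<alpha> \<rightarrow>\<^sub>E UNIV" shows "\<exists>\<xi>. Fm \<xi> = (\<alpha>, h)"
proof -
  have "(\<alpha>, h) \<in> Sig" using assms by simp
  then show ?thesis by (metis Fm_bij bij_betw_imp_surj_on imageE)
qed

lemma Fm_inj: "Fm a = Fm b \<Longrightarrow> a = b"
  using Fm_bij unfolding bij_betw_def inj_on_def by blast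

lemma Fm_in: "Fm a \<in> Sig"
  using Fm_bij unfolding bij_betw_def by blast

lemma bound_inj:
  assumes e: "inj_on e S" "e ` S \<subseteq> underS r \<alpha>"
  shows "\<exists>b. \<forall>s\<in>S. s \<sqsubset> b"
proof (rule ccontr)
  assume na: "\<not> ?thesis"
  have U: "\<exists>s\<in>S. b \<sqsubseteq> s" for b
  proof -
    obtain s where "s \<in> S" "\<not> s \<sqsubset> b" using na by blast
    then show ?thesis using notle[of s b] by blast
  qed
  define V where "V s = (\<lambda>\<xi>. snd (Fm \<xi>) (e s)) ` under r s" for s
  have Vne: "\<exists>v. v \<notin> V s" for s using small_image_ne[OF card_under] unfolding V_def by blast
  define h where "h = restrict (\<lambda>\<beta>. if \<beta> \<in> e ` S then (SOME v. v \<notin> V (inv_into S e \<beta>)) else undefined) (underS r \<alpha>)"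
  have "h \<in> underS r \<alpha> \<rightarrow>\<^sub>E UNIV" unfolding h_def by simp
  then obtain \<xi> where xi: "Fm \<xi> = (\<alpha>, h)" using Fm_surj by blast
  obtain s where s: "s \<in> S" "\<xi> \<sqsubseteq> s" using U[of \<xi>] by blast
  have "e s \<in> underS r \<alpha>" using e s by blast
  then have "h (e s) = (SOME v. v \<notin> V s)" unfolding h_def using s e(1) by (simp add: inv_into_f_f)
  then have "h (e s) \<notin> V s" using someI_ex[OF Vne] by metis
  moreover have "snd (Fm \<xi>) (e s) \<in> V s" unfolding V_def using s by auto
  ultimately show False using xi by simp
qed

lemma bound_img: "\<exists>b. \<forall>\<beta>\<in>underS r \<alpha>. g \<beta> \<sqsubset> b"
proof -
  have "inj_on (inv_into (underS r \<alpha>) g) (g ` underS r \<alpha>)" by (rule inj_on_inv_into) simp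
  moreover have "inv_into (underS r \<alpha>) g ` (g ` underS r \<alpha>) \<subseteq> underS r \<alpha>" by (auto intro: inv_into_into)
  ultimately obtain b where "\<forall>s\<in>g ` underS r \<alpha>. s \<sqsubset> b" using bound_inj by meson
  then show ?thesis by auto
qed

lemma ex_inf_underS: "\<exists>\<alpha>. infinite (underS r \<alpha>)"
proof (rule ccontr)
  assume "\<not> ?thesis"
  then have fin: "finite (underS r \<alpha>)" for \<alpha> by blast
  have "inj (\<lambda>\<alpha>. card (underS r \<alpha>))"
  proof (rule injI)
    fix a b assume eq: "card (underS r a) = card (underS r b)"
    show "a = b"
    proof (rule ccontr)
      assume "a \<noteq> b"
      then consider "a \<sqsubset> b" | "b \<sqsubset> a" using total[of a b] by blast
      then show False
      proof cases
        case 1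
        have "underS r a \<subseteq> underS r b"
        proof
          fix x assume "x \<in> underS r a"
          then show "x \<in> underS r b" using lt_le_trans[of x a b] \<open>a \<sqsubset> b\<close> by simp
        qed
        moreover have "a \<in> underS r b - underS r a" using \<open>a \<sqsubset> b\<close> by simp
        ultimately have "underS r a \<subset> underS r b" by blast
        then show False using eq psubset_card_mono[OF fin] by (metis less_irrefl)
      next
        case 2
        have "underS r b \<subseteq> underS r a"
        proof
          fix x assume "x \<in> underS r b"
          then show "x \<in> underS r a" using lt_le_trans[of x b a] \<open>b \<sqsubset> a\<close> by simp
        qed
        moreover have "b \<in> underS r a - underS r b" using \<open>b \<sqsubset> a\<close> by simp
        ultimately have "underS r b \<subset> underS r a" by blast
        then show False using eq psubset_card_mono[OF fin] by (metis less_irrefl)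
      qed
    qed
  qed
  then have "countable (UNIV :: 'k set)" by (rule countableI)
  then show False using unc by blast
qed

lemma bound_countable: assumes "countable S" shows "\<exists>b. \<forall>s\<in>S. s \<sqsubset> b"
proof -
  obtain \<alpha> where a: "infinite (underS r \<alpha>)" using ex_inf_underS by blast
  then obtain g :: "nat \<Rightarrow> 'k" where g: "inj g" "range g \<subseteq> underS r \<alpha>" using infinite_countable_subset by blast
  have "inj_on (g \<circ> to_nat_on S) S" using assms g(1) inj_on_to_nat_on by (metis comp_inj_on inj_on_subset subset_UNIV)
  moreover have "(g \<circ> to_nat_on S) ` S \<subseteq> underS r \<alpha>" using g(2) by auto
  ultimately show ?thesis by (rule bound_inj)
qed

lemma nomax: "\<exists>b. a \<sqsubset> b" using bound_countable[of "{a}"] by auto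

definition suc :: "'k \<Rightarrow> 'k" where "suc a = mn {b. a \<sqsubset> b}"

lemma suc: "a \<sqsubset> suc a" "a \<sqsubset> c \<Longrightarrow> suc a \<sqsubseteq> c"
  using mn[of "{b. a \<sqsubset> b}"] nomax unfolding suc_def by auto


definition mx :: "'k \<Rightarrow> 'k \<Rightarrow> 'k" where "mx a b = (if a \<sqsubseteq> b then b else a)"
lemma mx1: "a \<sqsubseteq> mx a b"
proof (cases "a \<sqsubseteq> b")
  case True then show ?thesis by (simp add: mx_def)
next
  case False then show ?thesis by (simp add: mx_def refl)
qed
lemma mx2: "b \<sqsubseteq> mx a b"
proof (cases "a \<sqsubseteq> b")
  case True then show ?thesis by (simp add: mx_def refl)
next
  case False then show ?thesis using total[of a b] by (simp add: mx_def)
qed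
lemmas mx = mx1 mx2

abbreviation bn where "bn \<equiv> basic_nbhd r"

lemma bn_iff: "y \<in> bn \<alpha> x \<longleftrightarrow> (\<forall>\<beta>. \<beta> \<sqsubset> \<alpha> \<longrightarrow> y \<beta> = x \<beta>)"
  unfolding basic_nbhd_def by auto

lemma bn_self: "x \<in> bn \<alpha> x" unfolding bn_iff by simp

lemma bn_mono: assumes "\<alpha> \<sqsubseteq> \<alpha>'" shows "bn \<alpha>' x \<subseteq> bn \<alpha> x"
proof
  fix y assume "y \<in> bn \<alpha>' x"
  then show "y \<in> bn \<alpha> x" unfolding bn_iff using lt_le_trans[of _ \<alpha> \<alpha>'] assms by simp
qed

lemma bn_eq: "y \<in> bn \<alpha> x \<Longrightarrow> bn \<alpha> y = bn \<alpha> x"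
  unfolding basic_nbhd_def by auto

lemma topspace_kt[simp]: "topspace (kappa_top r) = UNIV"
proof -
  have "x \<in> \<Union>{bn \<alpha> s |\<alpha> s. True}" for x using bn_self[of x] by blast
  then show ?thesis unfolding kappa_top_def topology_generated_by_topspace by blast
qed

lemma open_iff: "openin (kappa_top r) U \<longleftrightarrow> (\<forall>x\<in>U. \<exists>\<alpha>. bn \<alpha> x \<subseteq> U)"
proof
  assume "openin (kappa_top r) U"
  then have "generate_topology_on {bn \<alpha> s |\<alpha> s. True} U"
    unfolding kappa_top_def by (rule openin_topology_generated_by)
  then show "\<forall>x\<in>U. \<exists>\<alpha>. bn \<alpha> x \<subseteq> U"
  proof (induction rule: generate_topology_on.induct)
    case Empty then show ?case by simp
  next
    case (Int a b)
    show ?case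
    proof
      fix x assume "x \<in> a \<inter> b"
      then obtain \<alpha>1 \<alpha>2 where "bn \<alpha>1 x \<subseteq> a" "bn \<alpha>2 x \<subseteq> b" using Int.IH by blast
      then have "bn (mx \<alpha>1 \<alpha>2) x \<subseteq> a \<inter> b" using bn_mono[OF mx(1)] bn_mono[OF mx(2)] by blast
      then show "\<exists>\<alpha>. bn \<alpha> x \<subseteq> a \<inter> b" by blast
    qed
  next
    case (UN K)
    show ?case
    proof
      fix x assume "x \<in> \<Union>K"
      then obtain k where k: "k \<in> K" "x \<in> k" by blast
      then obtain \<alpha> where "bn \<alpha> x \<subseteq> k" using UN.IH by blast
      then have "bn \<alpha> x \<subseteq> \<Union>K" using k by blast
      then show "\<exists>\<alpha>. bn \<alpha> x \<subseteq> \<Union>K" by blast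
    qed
  next
    case (Basis s)
    then obtain \<alpha> t where st: "s = bn \<alpha> t" by blast
    show ?case
    proof
      fix x assume "x \<in> s"
      then have "bn \<alpha> x = s" using st bn_eq by simp
      then show "\<exists>\<alpha>. bn \<alpha> x \<subseteq> s" by blast
    qed
  qed
next
  assume H: "\<forall>x\<in>U. \<exists>\<alpha>. bn \<alpha> x \<subseteq> U"
  let ?K = "{bn \<alpha> x | \<alpha> x. x \<in> U \<and> bn \<alpha> x \<subseteq> U}"
  have "U \<subseteq> \<Union>?K"
  proof
    fix x assume "x \<in> U"
    then obtain \<alpha> where "bn \<alpha> x \<subseteq> U" using H by blast
    then have "bn \<alpha> x \<in> ?K" using \<open>x \<in> U\<close> by blast
    then show "x \<in> \<Union>?K" using bn_self[of x \<alpha>] by blast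
  qed
  moreover have "\<Union>?K \<subseteq> U" by blast
  ultimately have UK: "U = \<Union>?K" by blast
  have "generate_topology_on {bn \<alpha> s |\<alpha> s. True} (\<Union>?K)"
  proof (rule generate_topology_on.UN)
    fix k assume "k \<in> ?K"
    then obtain \<alpha> x where "k = bn \<alpha> x" by blast
    then have "k \<in> {bn \<alpha> s |\<alpha> s. True}" by blast
    then show "generate_topology_on {bn \<alpha> s |\<alpha> s. True} k" by (rule generate_topology_on.Basis)
  qed
  then have "openin (kappa_top r) (\<Union>?K)" unfolding kappa_top_def
    by (simp only: openin_topology_generated_by_iff)
  then show "openin (kappa_top r) U" using UK by metis
qed

lemma open_bn: "openin (kappa_top r) (bn \<alpha> x)"
  unfolding open_iff
proof
  fix y assume "y \<in> bn \<alpha> x"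
  then have "bn \<alpha> y = bn \<alpha> x" by (rule bn_eq)
  then show "\<exists>\<alpha>'. bn \<alpha>' y \<subseteq> bn \<alpha> x" by blast
qed

lemma closure_iff: "x \<in> kappa_top r closure_of S \<longleftrightarrow> (\<forall>\<alpha>. \<exists>y\<in>S. y \<in> bn \<alpha> x)"
proof
  assume H: "x \<in> kappa_top r closure_of S"
  show "\<forall>\<alpha>. \<exists>y\<in>S. y \<in> bn \<alpha> x"
  proof
    fix \<alpha>
    have "x \<in> bn \<alpha> x" by (rule bn_self)
    then show "\<exists>y\<in>S. y \<in> bn \<alpha> x" using H open_bn[of \<alpha> x] unfolding in_closure_of by blast
  qed
next
  assume H: "\<forall>\<alpha>. \<exists>y\<in>S. y \<in> bn \<alpha> x"
  show "x \<in> kappa_top r closure_of S" unfolding in_closure_of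
  proof (intro conjI allI impI)
    show "x \<in> topspace (kappa_top r)" by simp
    fix T assume "x \<in> T \<and> openin (kappa_top r) T"
    then obtain \<alpha> where "bn \<alpha> x \<subseteq> T" unfolding open_iff by blast
    then show "\<exists>y. y \<in> S \<and> y \<in> T" using H by blast
  qed
qed

lemma cont_crit:
  assumes A: "\<And>y \<alpha>. \<exists>\<theta>. \<forall>y'. y' \<in> bn \<theta> y \<longrightarrow> f y' \<in> bn \<alpha> (f y)"
  shows "continuous_map (kappa_top r) (kappa_top r) f"
  unfolding continuous_map_def
proof (intro conjI allI impI)
  show "f \<in> topspace (kappa_top r) \<rightarrow> topspace (kappa_top r)" by simp
  fix U assume "openin (kappa_top r) U"
  then have U: "\<forall>x\<in>U. \<exists>\<alpha>. bn \<alpha> x \<subseteq> U" using open_iff by blast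
  show "openin (kappa_top r) {x \<in> topspace (kappa_top r). f x \<in> U}"
    unfolding open_iff
  proof
    fix y assume "y \<in> {x \<in> topspace (kappa_top r). f x \<in> U}"
    then have "f y \<in> U" by simp
    then obtain \<alpha> where a: "bn \<alpha> (f y) \<subseteq> U" using U by blast
    obtain \<theta> where t: "\<forall>y'. y' \<in> bn \<theta> y \<longrightarrow> f y' \<in> bn \<alpha> (f y)" using A by blast
    have "bn \<theta> y \<subseteq> {x \<in> topspace (kappa_top r). f x \<in> U}"
    proof
      fix y' assume "y' \<in> bn \<theta> y"
      then have "f y' \<in> U" using t a by blast
      then show "y' \<in> {x \<in> topspace (kappa_top r). f x \<in> U}" by simp
    qed
    then show "\<exists>\<alpha>. bn \<alpha> y \<subseteq> {x \<in> topspace (kappa_top r). f x \<in> U}" by blast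
  qed
qed

lemma cont_closure: "continuous_map (kappa_top r) (kappa_top r) f \<Longrightarrow>
   kappa_top r closure_of (f -` S) \<subseteq> f -` (kappa_top r closure_of S)"
  using continuous_map_closure_preimage_subset[of "kappa_top r" "kappa_top r" f S] by (simp add: vimage_def)


lemma lt_induct: "(\<And>i. (\<And>j. j \<sqsubset> i \<Longrightarrow> P j) \<Longrightarrow> P i) \<Longrightarrow> P i"
proof -
  assume H: "\<And>i. (\<And>j. j \<sqsubset> i \<Longrightarrow> P j) \<Longrightarrow> P i"
  show "P i"
  proof (induction i rule: wf_induct_rule[OF wf])
    case (1 x)
    then show ?case using H by blast
  qed
qed

lemma lt_irrefl: "\<not> a \<sqsubset> a" by simp

lemma lt_trans: "a \<sqsubset> b \<Longrightarrow> b \<sqsubset> c \<Longrightarrow> a \<sqsubset> c" using lt_le_trans by blast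

lemma incr_ge:
  assumes inc: "\<And>i j. i \<sqsubset> j \<Longrightarrow> f i \<sqsubset> f j"
  shows "i \<sqsubseteq> f i"
proof (rule ccontr)
  assume "\<not> i \<sqsubseteq> f i"
  then have ne: "{j. f j \<sqsubset> j} \<noteq> {}" using notle by blast
  let ?j = "mn {j. f j \<sqsubset> j}"
  have j: "f ?j \<sqsubset> ?j" using mn(1)[OF ne] by simp
  then have "f (f ?j) \<sqsubset> f ?j" using inc by blast
  then have "?j \<sqsubseteq> f ?j" using mn(2)[OF ne, of "f ?j"] by simp
  then show False using j antisym by blast
qed

definition zero :: 'k where "zero = mn UNIV"
lemma zero_le: "zero \<sqsubseteq> j" unfolding zero_def by (rule mn_I) simp
lemma not_lt_zero: "\<not> j \<sqsubset> zero" using zero_le antisym by blast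

lemma avoid:
  assumes nd: "nowhere_dense_in (kappa_top r) N"
  shows "\<exists>l w. m \<sqsubseteq> l \<and> w \<in> bn m g \<and> bn l w \<inter> N = {}"
proof -
  have "\<not> bn m g \<subseteq> kappa_top r closure_of N"
  proof
    assume "bn m g \<subseteq> kappa_top r closure_of N"
    then have "bn m g \<subseteq> kappa_top r interior_of (kappa_top r closure_of N)"
      using interior_of_maximal open_bn by blast
    then show False using nd bn_self unfolding nowhere_dense_in_def by blast
  qed
  then obtain w where w: "w \<in> bn m g" "w \<notin> kappa_top r closure_of N" by blast
  then obtain \<alpha> where a: "\<forall>y\<in>N. y \<notin> bn \<alpha> w" unfolding closure_iff by blast
  have "bn (mx \<alpha> m) w \<inter> N = {}" using a bn_mono[OF mx(1), of \<alpha> m w] by blast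
  then show ?thesis using w mx(2) by blast
qed

lemma baire:
  fixes N :: "'k \<Rightarrow> ('k \<Rightarrow> 'k) set"
  assumes nd: "\<And>i. nowhere_dense_in (kappa_top r) (N i)"
  shows "\<exists>x\<in>bn a0 x0. \<forall>i. x \<notin> N i"
proof -
  define glue where "glue P i \<beta> = (if \<exists>j. j \<sqsubset> i \<and> \<beta> \<sqsubset> fst (P j)
     then snd (P (mn {j. j \<sqsubset> i \<and> \<beta> \<sqsubset> fst (P j)})) \<beta> else x0 \<beta>)"
    for P :: "'k \<Rightarrow> 'k \<times> ('k \<Rightarrow> 'k)" and i \<beta>
  define good where "good P i p \<longleftrightarrow> (\<forall>j. j \<sqsubset> i \<longrightarrow> fst (P j) \<sqsubset> fst p) \<and> a0 \<sqsubset> fst p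
     \<and> (\<forall>\<beta>. (\<beta> \<sqsubset> a0 \<or> (\<exists>j. j \<sqsubset> i \<and> \<beta> \<sqsubset> fst (P j))) \<longrightarrow> snd p \<beta> = glue P i \<beta>)
     \<and> bn (fst p) (snd p) \<inter> N i = {}"
    for P :: "'k \<Rightarrow> 'k \<times> ('k \<Rightarrow> 'k)" and i p
  have glue_cong: "glue P i = glue Q i" if "\<And>j. j \<sqsubset> i \<Longrightarrow> P j = Q j" for P Q i
  proof
    fix \<beta>
    have e: "{j. j \<sqsubset> i \<and> \<beta> \<sqsubset> fst (P j)} = {j. j \<sqsubset> i \<and> \<beta> \<sqsubset> fst (Q j)}" using that by auto
    show "glue P i \<beta> = glue Q i \<beta>"
    proof (cases "\<exists>j. j \<sqsubset> i \<and> \<beta> \<sqsubset> fst (P j)")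
      case True
      then have ne: "{j. j \<sqsubset> i \<and> \<beta> \<sqsubset> fst (P j)} \<noteq> {}" by blast
      have "mn {j. j \<sqsubset> i \<and> \<beta> \<sqsubset> fst (P j)} \<sqsubset> i" using mn(1)[OF ne] by blast
      then have "P (mn {j. j \<sqsubset> i \<and> \<beta> \<sqsubset> fst (P j)}) = Q (mn {j. j \<sqsubset> i \<and> \<beta> \<sqsubset> fst (Q j)})"
        using that e by simp
      have T2: "\<exists>j. j \<sqsubset> i \<and> \<beta> \<sqsubset> fst (Q j)" using True e by blast
      have "glue P i \<beta> = snd (P (mn {j. j \<sqsubset> i \<and> \<beta> \<sqsubset> fst (P j)})) \<beta>"
        unfolding glue_def using True by (simp only: if_True)
      moreover have "glue Q i \<beta> = snd (Q (mn {j. j \<sqsubset> i \<and> \<beta> \<sqsubset> fst (Q j)})) \<beta>"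
        unfolding glue_def using T2 by (simp only: if_True)
      ultimately show ?thesis using \<open>P _ = Q _\<close> by simp
    next
      case False
      then have F2: "\<not> (\<exists>j. j \<sqsubset> i \<and> \<beta> \<sqsubset> fst (Q j))" using e by blast
      have "glue P i \<beta> = x0 \<beta>" unfolding glue_def using False by (simp only: if_False)
      moreover have "glue Q i \<beta> = x0 \<beta>" unfolding glue_def using F2 by (simp only: if_False)
      ultimately show ?thesis by simp
    qed
  qed
  have good_cong: "good P i p = good Q i p" if "\<And>j. j \<sqsubset> i \<Longrightarrow> P j = Q j" for P Q i p
  proof -
    have "glue P i = glue Q i" using glue_cong that by blast
    moreover have "(\<forall>j. j \<sqsubset> i \<longrightarrow> fst (P j) \<sqsubset> fst p) = (\<forall>j. j \<sqsubset> i \<longrightarrow> fst (Q j) \<sqsubset> fst p)" using that by auto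
    moreover have "(\<exists>j. j \<sqsubset> i \<and> \<beta> \<sqsubset> fst (P j)) = (\<exists>j. j \<sqsubset> i \<and> \<beta> \<sqsubset> fst (Q j))" for \<beta> using that by auto
    ultimately show ?thesis unfolding good_def by simp
  qed
  have good_ex: "\<exists>p. good P i p" for P i
  proof -
    obtain b1 where b1: "\<forall>j\<in>underS r i. fst (P j) \<sqsubset> b1" using bound_img[of i "\<lambda>j. fst (P j)"] by blast
    define m where "m = suc (mx b1 a0)"
    have m1: "fst (P j) \<sqsubset> m" if "j \<sqsubset> i" for j
    proof -
      have "fst (P j) \<sqsubset> b1" using b1 that by simp
      then have "fst (P j) \<sqsubset> mx b1 a0" using lt_le_trans[OF _ mx(1)] by blast
      then show ?thesis unfolding m_def using lt_trans[OF _ suc(1)] by blast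
    qed
    have m2: "a0 \<sqsubset> m" unfolding m_def using le_lt_trans[OF mx(2) suc(1)] by blast
    obtain l w where lw: "m \<sqsubseteq> l" "w \<in> bn m (glue P i)" "bn l w \<inter> N i = {}" using avoid[OF nd[of i], of m "glue P i"] by blast
    have g1: "\<forall>j. j \<sqsubset> i \<longrightarrow> fst (P j) \<sqsubset> fst (l, w)"
      using lt_le_trans[OF m1 lw(1)] by simp
    have g2: "a0 \<sqsubset> fst (l, w)" using lt_le_trans[OF m2 lw(1)] by simp
    have g3: "\<forall>\<beta>. (\<beta> \<sqsubset> a0 \<or> (\<exists>j. j \<sqsubset> i \<and> \<beta> \<sqsubset> fst (P j))) \<longrightarrow> snd (l, w) \<beta> = glue P i \<beta>"
    proof (intro allI impI)
      fix \<beta> assume "\<beta> \<sqsubset> a0 \<or> (\<exists>j. j \<sqsubset> i \<and> \<beta> \<sqsubset> fst (P j))"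
      then have "\<beta> \<sqsubset> m" using m1 m2 lt_trans[of \<beta> _ m] by blast
      then show "snd (l, w) \<beta> = glue P i \<beta>" using lw(2) unfolding bn_iff by simp
    qed
    have g4: "bn (fst (l, w)) (snd (l, w)) \<inter> N i = {}" using lw(3) by simp
    have "good P i (l, w)" unfolding good_def using g1 g2 g3 g4 by blast
    then show ?thesis by blast
  qed
  define P where "P = wfrec (r - Id) (\<lambda>P i. SOME p. good P i p)"
  have Pgood: "good P i (P i)" for i
  proof -
    have "P i = (SOME p. good (cut P (r - Id) i) i p)" unfolding P_def by (subst wfrec[OF wf]) simp
    moreover have "good (cut P (r - Id) i) i = good P i"
      by (rule ext, rule good_cong) (simp add: cut_apply)
    ultimately show ?thesis using someI_ex[OF good_ex[of P i]] by simp
  qed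
  have inc: "fst (P j) \<sqsubset> fst (P i)" if "j \<sqsubset> i" for i j using Pgood[of i] that unfolding good_def by blast
  have coh: "\<And>j \<beta>. j \<sqsubset> i \<Longrightarrow> \<beta> \<sqsubset> fst (P j) \<Longrightarrow> snd (P i) \<beta> = snd (P j) \<beta>" for i
  proof (induction i rule: lt_induct)
    case (1 i)
    fix j \<beta> assume ji: "j \<sqsubset> i" and bj: "\<beta> \<sqsubset> fst (P j)"
    let ?S = "{j. j \<sqsubset> i \<and> \<beta> \<sqsubset> fst (P j)}"
    have ne: "?S \<noteq> {}" using ji bj by blast
    have "\<forall>\<beta>. (\<beta> \<sqsubset> a0 \<or> (\<exists>j. j \<sqsubset> i \<and> \<beta> \<sqsubset> fst (P j))) \<longrightarrow> snd (P i) \<beta> = glue P i \<beta>"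
      using Pgood[of i] unfolding good_def by blast
    then have "snd (P i) \<beta> = glue P i \<beta>" using ji bj by blast
    also have "\<dots> = snd (P (mn ?S)) \<beta>"
    proof -
      have "\<exists>j. j \<sqsubset> i \<and> \<beta> \<sqsubset> fst (P j)" using ji bj by blast
      then show ?thesis unfolding glue_def by (simp only: if_True)
    qed
    also have "\<dots> = snd (P j) \<beta>"
    proof (cases "mn ?S = j")
      case False
      have "mn ?S \<sqsubseteq> j" using mn(2)[OF ne] ji bj by blast
      then have "mn ?S \<sqsubset> j" using False by simp
      moreover have "\<beta> \<sqsubset> fst (P (mn ?S))" using mn(1)[OF ne] by blast
      ultimately show ?thesis using "1.IH"[OF ji] by simp
    qed simp
    finally show "snd (P i) \<beta> = snd (P j) \<beta>" .
  qed
  have geq: "i \<sqsubseteq> fst (P i)" for i by (rule incr_ge) (rule inc)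
  define x where "x \<beta> = snd (P (mn {j. \<beta> \<sqsubset> fst (P j)})) \<beta>" for \<beta>
  have xin: "x \<in> bn (fst (P i)) (snd (P i))" for i
    unfolding bn_iff
  proof (intro allI impI)
    fix \<beta> assume b: "\<beta> \<sqsubset> fst (P i)"
    let ?S = "{j. \<beta> \<sqsubset> fst (P j)}"
    have ne: "?S \<noteq> {}" using b by blast
    have le: "mn ?S \<sqsubseteq> i" using mn(2)[OF ne] b by blast
    show "x \<beta> = snd (P i) \<beta>"
    proof (cases "mn ?S = i")
      case True then show ?thesis unfolding x_def by simp
    next
      case False
      then have "mn ?S \<sqsubset> i" using le by simp
      then show ?thesis unfolding x_def using coh[of "mn ?S" i \<beta>] mn(1)[OF ne] by simp
    qed
  qed
  have "x \<notin> N i" for i using xin[of i] Pgood[of i] unfolding good_def by blast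
  moreover have "x \<in> bn a0 x0"
    unfolding bn_iff
  proof (intro allI impI)
    fix \<beta> assume b: "\<beta> \<sqsubset> a0"
    have "a0 \<sqsubset> fst (P zero)" using Pgood[of zero] unfolding good_def by blast
    then have b2: "\<beta> \<sqsubset> fst (P zero)" using b lt_trans by blast
    then have "x \<beta> = snd (P zero) \<beta>" using xin[of zero] unfolding bn_iff by blast
    also have "\<dots> = glue P zero \<beta>" using Pgood[of zero] b unfolding good_def by blast
    also have "\<dots> = x0 \<beta>"
    proof -
      have "\<not> (\<exists>j. j \<sqsubset> zero \<and> \<beta> \<sqsubset> fst (P j))" using not_lt_zero by blast
      then show ?thesis unfolding glue_def by (simp only: if_False)
    qed
    finally show "x \<beta> = x0 \<beta>" .
  qed
  ultimately show ?thesis by blast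
qed

lemma baire_open:
  fixes N :: "'k \<Rightarrow> ('k \<Rightarrow> 'k) set"
  assumes "openin (kappa_top r) V" "V \<noteq> {}" "\<And>i. nowhere_dense_in (kappa_top r) (N i)"
  shows "\<not> V \<subseteq> (\<Union>i. N i)"
proof -
  obtain x0 where "x0 \<in> V" using assms(2) by blast
  then obtain a0 where "bn a0 x0 \<subseteq> V" using assms(1) open_iff by blast
  moreover obtain x where "x \<in> bn a0 x0" "\<forall>i. x \<notin> N i" using baire[of N a0 x0] assms(3) by blast
  ultimately show ?thesis by blast
qed


definition lub :: "'k set \<Rightarrow> 'k" where "lub A = mn {b. \<forall>a\<in>A. a \<sqsubseteq> b}"

lemma lub_ub: assumes "\<exists>b. \<forall>a\<in>A. a \<sqsubseteq> b" "a \<in> A" shows "a \<sqsubseteq> lub A"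
proof -
  have ne: "{b. \<forall>a\<in>A. a \<sqsubseteq> b} \<noteq> {}" using assms(1) by blast
  show ?thesis using mn(1)[OF ne] assms(2) unfolding lub_def by blast
qed

lemma lub_least: assumes "\<forall>a\<in>A. a \<sqsubseteq> b" shows "lub A \<sqsubseteq> b"
  unfolding lub_def using assms by (intro mn_I) simp

lemma bounded_img: "\<exists>b. \<forall>a\<in>g ` underS r i. a \<sqsubseteq> b"
proof -
  obtain b where "\<forall>\<beta>\<in>underS r i. g \<beta> \<sqsubset> b" using bound_img[of i g] by blast
  then show ?thesis by blast
qed

definition lim :: "'k \<Rightarrow> bool" where "lim i \<longleftrightarrow> i \<noteq> zero \<and> (\<forall>j. j \<sqsubset> i \<longrightarrow> suc j \<sqsubset> i)"

lemma not_lim_zero: "\<not> lim zero" unfolding lim_def by simp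
lemma not_lim_suc: "\<not> lim (suc j)" unfolding lim_def using suc(1)[of j] by blast

definition en :: "('k \<Rightarrow> 'k) \<Rightarrow> 'k \<Rightarrow> 'k \<Rightarrow> 'k" where
  "en y i s = (if lim i then suc s else if s \<sqsubset> fst (Fm (y i)) then fst (Fm (y i)) else suc s)"

lemma en_gt: "s \<sqsubset> en y i s" unfolding en_def using suc(1) by auto

definition ST :: "('k \<Rightarrow> 'k) \<Rightarrow> 'k \<Rightarrow> 'k" where
  "ST y = wfrec (r - Id) (\<lambda>S i. lub ((\<lambda>j. en y j (S j)) ` underS r i))"

definition EN :: "('k \<Rightarrow> 'k) \<Rightarrow> 'k \<Rightarrow> 'k" where "EN y i = en y i (ST y i)"

lemma ST_eq: "ST y i = lub (EN y ` underS r i)"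
proof -
  have "ST y i = lub ((\<lambda>j. en y j (cut (ST y) (r - Id) i j)) ` underS r i)"
    unfolding ST_def by (subst wfrec[OF wf]) simp
  also have "(\<lambda>j. en y j (cut (ST y) (r - Id) i j)) ` underS r i = EN y ` underS r i"
    unfolding EN_def by (rule image_cong) (simp_all add: cut_apply)
  finally show ?thesis .
qed

lemma ST_lt_EN: "ST y i \<sqsubset> EN y i" unfolding EN_def by (rule en_gt)

lemma EN_le_ST: "j \<sqsubset> i \<Longrightarrow> EN y j \<sqsubseteq> ST y i"
  unfolding ST_eq by (rule lub_ub[OF bounded_img]) simp

lemma ST_least: "(\<And>j. j \<sqsubset> i \<Longrightarrow> EN y j \<sqsubseteq> b) \<Longrightarrow> ST y i \<sqsubseteq> b"
  unfolding ST_eq by (rule lub_least) simp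

lemma ST_mono: "j \<sqsubset> i \<Longrightarrow> ST y j \<sqsubset> ST y i"
  using lt_le_trans[OF ST_lt_EN EN_le_ST] by blast

lemma ST_ge: "i \<sqsubseteq> ST y i" by (rule incr_ge) (rule ST_mono)

definition stg :: "('k \<Rightarrow> 'k) \<Rightarrow> 'k \<Rightarrow> 'k" where "stg y \<beta> = mn {i. \<beta> \<sqsubset> EN y i}"

lemma stg_ne: "{i. \<beta> \<sqsubset> EN y i} \<noteq> {}"
proof -
  have "\<beta> \<sqsubset> ST y (suc \<beta>)" using lt_le_trans[OF suc(1) ST_ge] .
  then have "\<beta> \<sqsubset> EN y (suc \<beta>)" using lt_trans ST_lt_EN by blast
  then show ?thesis by blast
qed

lemma stg_eq: assumes "ST y i \<sqsubseteq> \<beta>" "\<beta> \<sqsubset> EN y i" shows "stg y \<beta> = i"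
proof -
  have 1: "mn {i. \<beta> \<sqsubset> EN y i} \<sqsubseteq> i" using assms(2) by (intro mn_I) simp
  have 2: "\<beta> \<sqsubset> EN y (mn {i. \<beta> \<sqsubset> EN y i})" using mn(1)[OF stg_ne] by simp
  show ?thesis
  proof (rule ccontr)
    assume "stg y \<beta> \<noteq> i"
    then have "mn {i. \<beta> \<sqsubset> EN y i} \<sqsubset> i" using 1 unfolding stg_def by simp
    then have "EN y (mn {i. \<beta> \<sqsubset> EN y i}) \<sqsubseteq> \<beta>" using EN_le_ST assms(1) trans by blast
    then show False using 2 notle by blast
  qed
qed

lemma stg_props: "ST y (stg y \<beta>) \<sqsubseteq> \<beta>" "\<beta> \<sqsubset> EN y (stg y \<beta>)"
proof -
  show "\<beta> \<sqsubset> EN y (stg y \<beta>)" using mn(1)[OF stg_ne] unfolding stg_def by simp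
  show "ST y (stg y \<beta>) \<sqsubseteq> \<beta>"
  proof (rule ST_least)
    fix j assume "j \<sqsubset> stg y \<beta>"
    then have "\<not> \<beta> \<sqsubset> EN y j" using mn(2)[of "{i. \<beta> \<sqsubset> EN y i}" j] stg_ne antisym unfolding stg_def by blast
    then show "EN y j \<sqsubseteq> \<beta>" using notle by blast
  qed
qed

lemma locality:
  assumes "\<forall>j. j \<sqsubset> i \<longrightarrow> y j = y' j"
  shows "k \<sqsubseteq> i \<Longrightarrow> ST y k = ST y' k"
proof (induction k rule: lt_induct)
  case (1 k)
  have "EN y ` underS r k = EN y' ` underS r k"
  proof (rule image_cong)
    fix j assume "j \<in> underS r k"
    then have jk: "j \<sqsubset> k" by simp
    then have "j \<sqsubset> i" using lt_le_trans "1.prems" by blast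
    then have "y j = y' j" using assms by blast
    moreover have "ST y j = ST y' j" using "1.IH"[OF jk] jk "1.prems" trans by blast
    ultimately show "EN y j = EN y' j" unfolding EN_def en_def by simp
  qed simp
  then show ?case unfolding ST_eq by simp
qed

lemma locality_EN:
  assumes "\<forall>j. j \<sqsubset> i \<longrightarrow> y j = y' j" "k \<sqsubset> i"
  shows "EN y k = EN y' k"
  using locality[OF assms(1), of k] assms unfolding EN_def en_def by simp


definition pr :: "'k \<times> 'k \<Rightarrow> 'k" where "pr = (SOME p. bij_betw p (UNIV \<times> UNIV) (UNIV :: 'k set))"

lemma pr_inj: "pr a = pr b \<Longrightarrow> a = b"
proof -
  have "|UNIV \<times> UNIV :: ('k \<times> 'k) set| =o |UNIV :: 'k set|"
    using card_of_Times_same_infinite[OF inf] by simp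
  then have "\<exists>p. bij_betw p (UNIV \<times> UNIV :: ('k \<times> 'k) set) (UNIV :: 'k set)"
    by (simp only: card_of_ordIso[symmetric])
  then have "bij_betw pr (UNIV \<times> UNIV) (UNIV :: 'k set)" unfolding pr_def by (rule someI_ex)
  then have "inj pr" unfolding bij_betw_def by simp
  then show "pr a = pr b \<Longrightarrow> a = b" by (rule injD)
qed

definition Gc :: "'k \<times> ('k \<Rightarrow> 'k) \<Rightarrow> 'k" where "Gc = inv Fm"

lemma Gc_inj: "s \<in> Sig \<Longrightarrow> t \<in> Sig \<Longrightarrow> Gc s = Gc t \<Longrightarrow> s = t"
  unfolding Gc_def using Fm_bij by (metis bij_betw_imp_surj_on f_inv_into_f)

definition code :: "'k set \<Rightarrow> ('k \<Rightarrow> 'k) \<Rightarrow> 'k \<Rightarrow> 'k \<Rightarrow> 'k" where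
  "code \<gamma> y l p = Gc (p, restrict (\<lambda>\<beta>. pr (if \<beta> \<in> \<gamma> then zero else suc zero, pr (l, if \<beta> \<sqsubset> l then y \<beta> else zero))) (underS r p))"

definition fg :: "'k set \<Rightarrow> ('k \<Rightarrow> 'k) \<Rightarrow> ('k \<Rightarrow> 'k)" where
  "fg \<gamma> y \<beta> = (if lim (stg y \<beta>) then code \<gamma> y (stg y \<beta>) (ST y (stg y \<beta>)) else snd (Fm (y (stg y \<beta>))) \<beta>)"

lemma fg_locality:
  assumes A: "\<forall>j. j \<sqsubset> i \<longrightarrow> y j = y' j" and b: "\<beta> \<sqsubset> ST y i"
  shows "fg \<gamma> y \<beta> = fg \<gamma> y' \<beta>"
proof -
  let ?k = "stg y \<beta>"
  have k1: "ST y ?k \<sqsubseteq> \<beta>" "\<beta> \<sqsubset> EN y ?k" using stg_props by blast+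
  have ki: "?k \<sqsubset> i"
  proof (rule ccontr)
    assume "\<not> ?k \<sqsubset> i"
    then have "i \<sqsubseteq> ?k" using notle by blast
    have "ST y i \<sqsubseteq> ST y ?k"
    proof (cases "i = ?k")
      case True then show ?thesis using refl by simp
    next
      case False then show ?thesis using ST_mono[of i ?k y] \<open>i \<sqsubseteq> ?k\<close> by simp
    qed
    then have "ST y i \<sqsubseteq> \<beta>" using k1(1) trans by blast
    then show False using lt_le_trans[OF b, of \<beta>] by simp
  qed
  have e1: "ST y ?k = ST y' ?k" using locality[OF A, of ?k] ki by simp
  have e2: "EN y ?k = EN y' ?k" using locality_EN[OF A ki] .
  have s': "stg y' \<beta> = ?k" using stg_eq[of y' ?k \<beta>] k1 e1 e2 by simp
  have yk: "y ?k = y' ?k" using A ki by blast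
  have "code \<gamma> y ?k (ST y ?k) = code \<gamma> y' ?k (ST y ?k)"
  proof -
    have "(\<lambda>\<beta>. pr (if \<beta> \<in> \<gamma> then zero else suc zero, pr (?k, if \<beta> \<sqsubset> ?k then y \<beta> else zero)))
        = (\<lambda>\<beta>. pr (if \<beta> \<in> \<gamma> then zero else suc zero, pr (?k, if \<beta> \<sqsubset> ?k then y' \<beta> else zero)))"
    proof (rule ext)
      fix \<beta>
      have "\<beta> \<sqsubset> ?k \<Longrightarrow> y \<beta> = y' \<beta>" using A lt_trans[OF _ ki] by blast
      then show "pr (if \<beta> \<in> \<gamma> then zero else suc zero, pr (?k, if \<beta> \<sqsubset> ?k then y \<beta> else zero)) =
            pr (if \<beta> \<in> \<gamma> then zero else suc zero, pr (?k, if \<beta> \<sqsubset> ?k then y' \<beta> else zero))" by simp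
    qed
    then show ?thesis unfolding code_def by simp
  qed
  then show ?thesis unfolding fg_def using s' e1 yk by simp
qed

lemma fg_cont: "continuous_map (kappa_top r) (kappa_top r) (fg \<gamma>)"
proof (rule cont_crit)
  fix y \<alpha>
  show "\<exists>\<theta>. \<forall>y'. y' \<in> bn \<theta> y \<longrightarrow> fg \<gamma> y' \<in> bn \<alpha> (fg \<gamma> y)"
  proof (intro exI allI impI)
    fix y' assume "y' \<in> bn \<alpha> y"
    then have A: "\<forall>j. j \<sqsubset> \<alpha> \<longrightarrow> y j = y' j" unfolding bn_iff by simp
    show "fg \<gamma> y' \<in> bn \<alpha> (fg \<gamma> y)" unfolding bn_iff
    proof (intro allI impI)
      fix \<beta> assume "\<beta> \<sqsubset> \<alpha>"
      then have "\<beta> \<sqsubset> ST y \<alpha>" using lt_le_trans ST_ge by blast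
      then show "fg \<gamma> y' \<beta> = fg \<gamma> y \<beta>" using fg_locality[OF A] by simp
    qed
  qed
qed

lemma density:
  assumes nl: "\<not> lim ii" and x: "x \<in> bn (ST yy ii) (fg \<gamma> yy)"
  shows "\<exists>y. (\<forall>j. j \<sqsubset> ii \<longrightarrow> y j = yy j) \<and> fg \<gamma> y \<in> bn b x"
proof -
  define a where "a = ST yy ii"
  define b' where "b' = suc (mx a b)"
  have ab': "a \<sqsubset> b'" unfolding b'_def using le_lt_trans[OF mx(1) suc(1)] .
  have bb': "b \<sqsubset> b'" unfolding b'_def using le_lt_trans[OF mx(2) suc(1)] .
  obtain c where c: "Fm c = (b', restrict x (underS r b'))" using Fm_surj[of "restrict x (underS r b')" b'] by auto
  define y where "y = yy(ii := c)"
  have A: "\<forall>j. j \<sqsubset> ii \<longrightarrow> yy j = y j" unfolding y_def by simp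
  have sty: "ST y ii = a" unfolding a_def using locality[OF A, of ii] refl by simp
  have eny: "EN y ii = b'" unfolding EN_def en_def sty using nl ab' c unfolding y_def by simp
  have "fg \<gamma> y \<in> bn b x" unfolding bn_iff
  proof (intro allI impI)
    fix \<beta> assume "\<beta> \<sqsubset> b"
    then have bb: "\<beta> \<sqsubset> b'" using bb' lt_trans by blast
    show "fg \<gamma> y \<beta> = x \<beta>"
    proof (cases "\<beta> \<sqsubset> a")
      case True
      then have "fg \<gamma> yy \<beta> = fg \<gamma> y \<beta>" using fg_locality[OF A] unfolding a_def by blast
      moreover have "x \<beta> = fg \<gamma> yy \<beta>" using x True unfolding bn_iff a_def by blast
      ultimately show ?thesis by simp
    next
      case False
      then have "a \<sqsubseteq> \<beta>" using notle by blast
      then have "stg y \<beta> = ii" using stg_eq[of y ii \<beta>] sty eny bb by simp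
      then show ?thesis unfolding fg_def using nl c bb unfolding y_def by simp
    qed
  qed
  then show ?thesis using A by auto
qed


lemma seq_lub:
  fixes a :: "nat \<Rightarrow> 'k"
  assumes inc: "\<And>n. a n \<sqsubset> a (Suc n)"
  defines "l \<equiv> lub (range a)"
  shows "\<And>n. a n \<sqsubset> l" and "\<And>j. j \<sqsubset> l \<Longrightarrow> \<exists>n. j \<sqsubset> a n" and "lim l"
    and "ST y l = lub (range (\<lambda>n. ST y (a n)))"
proof -
  have bd: "\<exists>b. \<forall>x\<in>range a. x \<sqsubseteq> b" using bound_countable[of "range a"] by blast
  show an: "a n \<sqsubset> l" for n using lt_le_trans[OF inc lub_ub[OF bd]] unfolding l_def by simp
  show ex: "\<exists>n. j \<sqsubset> a n" if "j \<sqsubset> l" for j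
  proof (rule ccontr)
    assume "\<not> (\<exists>n. j \<sqsubset> a n)"
    then have "\<forall>x\<in>range a. x \<sqsubseteq> j" using notle by blast
    then have "l \<sqsubseteq> j" unfolding l_def by (rule lub_least)
    then show False using that notle by blast
  qed
  have l1: "l \<noteq> zero" using an[of 0] not_lt_zero by blast
  have l2: "suc j \<sqsubset> l" if jl: "j \<sqsubset> l" for j
  proof -
    obtain n where "j \<sqsubset> a n" using ex[OF jl] by blast
    then have "suc j \<sqsubseteq> a n" by (rule suc(2))
    then show "suc j \<sqsubset> l" using le_lt_trans an by blast
  qed
  show "lim l" unfolding lim_def using l1 l2 by blast
  have bd2: "\<exists>b. \<forall>x\<in>range (\<lambda>n. ST y (a n)). x \<sqsubseteq> b" using bound_countable[of "range (\<lambda>n. ST y (a n))"] by blast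
  have 1: "ST y l \<sqsubseteq> lub (range (\<lambda>n. ST y (a n)))"
  proof (rule ST_least)
    fix j assume "j \<sqsubset> l"
    then obtain n where "j \<sqsubset> a n" using ex by blast
    then have "EN y j \<sqsubseteq> ST y (a n)" by (rule EN_le_ST)
    moreover have "ST y (a n) \<sqsubseteq> lub (range (\<lambda>n. ST y (a n)))" by (rule lub_ub[OF bd2]) simp
    ultimately show "EN y j \<sqsubseteq> lub (range (\<lambda>n. ST y (a n)))" using trans by blast
  qed
  have 2: "lub (range (\<lambda>n. ST y (a n))) \<sqsubseteq> ST y l"
    by (rule lub_least) (use ST_mono[OF an] in blast)
  show "ST y l = lub (range (\<lambda>n. ST y (a n)))" using 1 2 antisym by blast
qed

lemma club:
  "\<exists>l l'. lim l \<and> lim l' \<and> b0 \<sqsubset> l \<and> ST y l = ST y' l'"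
proof -
  define sq where "sq = rec_nat (suc b0, suc (ST y (suc b0)))
     (\<lambda>n p. (suc (mx (fst p) (ST y' (snd p))), suc (mx (snd p) (ST y (suc (mx (fst p) (ST y' (snd p))))))))"
  define a where "a n = fst (sq n)" for n
  define a' where "a' n = snd (sq n)" for n
  have a0: "a 0 = suc b0" "a' 0 = suc (ST y (suc b0))" unfolding a_def a'_def sq_def by simp_all
  have aS: "a (Suc n) = suc (mx (a n) (ST y' (a' n)))" for n unfolding a_def a'_def sq_def by simp
  have a'S: "a' (Suc n) = suc (mx (a' n) (ST y (a (Suc n))))" for n
    unfolding a_def a'_def sq_def by simp
  have inc: "a n \<sqsubset> a (Suc n)" for n unfolding aS using le_lt_trans[OF mx(1) suc(1)] .
  have inc': "a' n \<sqsubset> a' (Suc n)" for n unfolding a'S using le_lt_trans[OF mx(1) suc(1)] .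
  have c1: "ST y (a n) \<sqsubset> a' n" for n
  proof (cases n)
    case 0 then show ?thesis using a0 suc(1) by simp
  next
    case (Suc m) then show ?thesis using a'S[of m] le_lt_trans[OF mx(2) suc(1)] by simp
  qed
  have c2: "ST y' (a' n) \<sqsubset> a (Suc n)" for n unfolding aS using le_lt_trans[OF mx(2) suc(1)] .
  define l where "l = lub (range a)"
  define l' where "l' = lub (range a')"
  note L = seq_lub[where a=a, OF inc, folded l_def] and L' = seq_lub[where a=a', OF inc', folded l'_def]
  have bd: "\<exists>b. \<forall>x\<in>range (\<lambda>n. ST y (a n)). x \<sqsubseteq> b" using bound_countable[of "range (\<lambda>n. ST y (a n))"] by blast
  have bd': "\<exists>b. \<forall>x\<in>range (\<lambda>n. ST y' (a' n)). x \<sqsubseteq> b" using bound_countable[of "range (\<lambda>n. ST y' (a' n))"] by blast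
  have "lub (range (\<lambda>n. ST y (a n))) \<sqsubseteq> lub (range (\<lambda>n. ST y' (a' n)))"
  proof (rule lub_least, safe)
    fix n
    have "ST y (a n) \<sqsubset> ST y' (a' n)" using lt_le_trans[OF c1 ST_ge] .
    moreover have "ST y' (a' n) \<sqsubseteq> lub (range (\<lambda>n. ST y' (a' n)))" by (rule lub_ub[OF bd']) simp
    ultimately show "ST y (a n) \<sqsubseteq> lub (range (\<lambda>n. ST y' (a' n)))" using trans by blast
  qed
  moreover have "lub (range (\<lambda>n. ST y' (a' n))) \<sqsubseteq> lub (range (\<lambda>n. ST y (a n)))"
  proof (rule lub_least, safe)
    fix n
    have "ST y' (a' n) \<sqsubset> ST y (a (Suc n))" using lt_le_trans[OF c2 ST_ge] .
    moreover have "ST y (a (Suc n)) \<sqsubseteq> lub (range (\<lambda>n. ST y (a n)))" by (rule lub_ub[OF bd]) simp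
    ultimately show "ST y' (a' n) \<sqsubseteq> lub (range (\<lambda>n. ST y (a n)))" using trans by blast
  qed
  ultimately have "ST y l = ST y' l'" using L(4)[of y] L'(4)[of y'] antisym by simp
  moreover have "b0 \<sqsubset> l" using lt_trans[OF _ L(1)[of 0]] a0 suc(1) by simp
  ultimately show ?thesis using L(3) L'(3) by blast
qed

lemma fg_eq:
  assumes eq: "fg \<gamma> y = fg \<delta> y'"
  shows "\<gamma> = \<delta> \<and> y = y'"
proof -
  have key: "(y b0 = y' b0) \<and> (b0 \<in> \<gamma> \<longleftrightarrow> b0 \<in> \<delta>)" for b0
  proof -
    obtain l l' where ll: "lim l" "lim l'" "b0 \<sqsubset> l" "ST y l = ST y' l'" using club[of b0 y y'] by blast
    define p where "p = ST y l"
    have s1: "stg y p = l" using stg_eq[of y l p] refl ST_lt_EN unfolding p_def by simp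
    have s2: "stg y' p = l'" using stg_eq[of y' l' p] refl ST_lt_EN ll(4) unfolding p_def by simp
    have "fg \<gamma> y p = code \<gamma> y l p" unfolding fg_def s1 using ll(1) p_def by simp
    moreover have "fg \<delta> y' p = code \<delta> y' l' p" unfolding fg_def s2 using ll(2,4) p_def by simp
    ultimately have ceq: "code \<gamma> y l p = code \<delta> y' l' p" using eq by metis
    define g1 where "g1 = restrict (\<lambda>\<beta>. pr (if \<beta> \<in> \<gamma> then zero else suc zero, pr (l, if \<beta> \<sqsubset> l then y \<beta> else zero))) (underS r p)"
    define g2 where "g2 = restrict (\<lambda>\<beta>. pr (if \<beta> \<in> \<delta> then zero else suc zero, pr (l', if \<beta> \<sqsubset> l' then y' \<beta> else zero))) (underS r p)"
    have m1: "(p, g1) \<in> Sig" unfolding g1_def by simp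
    have m2: "(p, g2) \<in> Sig" unfolding g2_def by simp
    have "Gc (p, g1) = Gc (p, g2)" using ceq unfolding code_def g1_def g2_def .
    then have "(p, g1) = (p, g2)" by (rule Gc_inj[OF m1 m2])
    then have geq: "g1 = g2" by simp
    have F: "pr (if \<beta> \<in> \<gamma> then zero else suc zero, pr (l, if \<beta> \<sqsubset> l then y \<beta> else zero))
       = pr (if \<beta> \<in> \<delta> then zero else suc zero, pr (l', if \<beta> \<sqsubset> l' then y' \<beta> else zero))" if bp: "\<beta> \<sqsubset> p" for \<beta>
    proof -
      have "g1 \<beta> = g2 \<beta>" using geq by simp
      then show ?thesis unfolding g1_def g2_def using bp by simp
    qed
    have lp: "l \<sqsubseteq> p" unfolding p_def by (rule ST_ge)
    have b0p: "b0 \<sqsubset> p" using lt_le_trans[OF ll(3) lp] .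
    have F2: "(if b0 \<in> \<gamma> then zero else suc zero, pr (l, if b0 \<sqsubset> l then y b0 else zero))
       = (if b0 \<in> \<delta> then zero else suc zero, pr (l', if b0 \<sqsubset> l' then y' b0 else zero))"
      by (rule pr_inj) (rule F[OF b0p])
    then have "pr (l, if b0 \<sqsubset> l then y b0 else zero) = pr (l', if b0 \<sqsubset> l' then y' b0 else zero)" by simp
    then have "(l, if b0 \<sqsubset> l then y b0 else zero) = (l', if b0 \<sqsubset> l' then y' b0 else zero)" by (rule pr_inj)
    then have L: "l = l'" "y b0 = y' b0" using ll(3) by auto
    have z: "zero \<noteq> suc zero" using suc(1)[of zero] by blast
    have "(if b0 \<in> \<gamma> then zero else suc zero) = (if b0 \<in> \<delta> then zero else suc zero)" using F2 by simp
    then have "b0 \<in> \<gamma> \<longleftrightarrow> b0 \<in> \<delta>" using z by (cases "b0 \<in> \<gamma>"; cases "b0 \<in> \<delta>") simp_all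
    then show ?thesis using L by blast
  qed
  then show ?thesis by blast
qed


lemma nd_preimage:
  assumes nd: "nowhere_dense_in (kappa_top r) N"
  shows "nowhere_dense_in (kappa_top r) (fg \<gamma> -` N)"
  unfolding nowhere_dense_in_def
proof (rule ccontr)
  let ?T = "kappa_top r"
  assume "?T interior_of (?T closure_of (fg \<gamma> -` N)) \<noteq> {}"
  then obtain y0 where y0: "y0 \<in> ?T interior_of (?T closure_of (fg \<gamma> -` N))" by blast
  have "openin ?T (?T interior_of (?T closure_of (fg \<gamma> -` N)))" by (rule openin_interior_of)
  then obtain \<theta> where th: "bn \<theta> y0 \<subseteq> ?T interior_of (?T closure_of (fg \<gamma> -` N))" using y0 open_iff by blast
  also have "\<dots> \<subseteq> ?T closure_of (fg \<gamma> -` N)" by (rule interior_of_subset)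
  also have "\<dots> \<subseteq> fg \<gamma> -` (?T closure_of N)" by (rule cont_closure[OF fg_cont])
  finally have sub: "bn \<theta> y0 \<subseteq> fg \<gamma> -` (?T closure_of N)" .
  define a where "a = ST y0 (suc \<theta>)"
  have "bn a (fg \<gamma> y0) \<subseteq> ?T closure_of N"
  proof
    fix x assume x: "x \<in> bn a (fg \<gamma> y0)"
    have "x \<in> ?T closure_of (?T closure_of N)" unfolding closure_iff
    proof
      fix b
      obtain y where y: "\<forall>j. j \<sqsubset> suc \<theta> \<longrightarrow> y j = y0 j" "fg \<gamma> y \<in> bn b x"
        using density[where ii="suc \<theta>" and x=x and yy=y0 and \<gamma>=\<gamma> and b=b, OF not_lim_suc] x unfolding a_def by blast
      have "y \<in> bn \<theta> y0" unfolding bn_iff using y(1) lt_trans[OF _ suc(1)] by blast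
      then have "fg \<gamma> y \<in> ?T closure_of N" using sub by blast
      then show "\<exists>z\<in>?T closure_of N. z \<in> bn b x" using y(2) by blast
    qed
    then show "x \<in> ?T closure_of N" by (simp add: closure_of_closure_of)
  qed
  then have "bn a (fg \<gamma> y0) \<subseteq> ?T interior_of (?T closure_of N)"
    using interior_of_maximal open_bn by blast
  then show False using nd bn_self unfolding nowhere_dense_in_def by blast
qed

lemma ST_zero: "ST y zero = zero"
proof -
  have "ST y zero \<sqsubseteq> zero" by (rule ST_least) (simp add: not_lt_zero)
  then show ?thesis using zero_le antisym by blast
qed

lemma bn_zero: "bn zero x = UNIV"
proof -
  have "x' \<in> bn zero x" for x' unfolding bn_iff using not_lt_zero by blast
  then show ?thesis by blast
qed

lemma preimage_open: "openin (kappa_top r) U \<Longrightarrow> openin (kappa_top r) (fg \<gamma> -` U)"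
  using fg_cont[of \<gamma>] unfolding continuous_map_def by (simp add: vimage_def)

theorem main:
  "\<exists>A :: 'k set \<Rightarrow> ('k \<Rightarrow> 'k) set.
           (\<forall>\<gamma> \<delta>. \<gamma> \<noteq> \<delta> \<longrightarrow> A \<gamma> \<inter> A \<delta> = {})
         \<and> (\<forall>\<gamma>. \<exists>f. continuous_map (kappa_top r) (kappa_top r) f \<and> inj f \<and> A \<gamma> = range f)
         \<and> (\<forall>\<gamma> \<delta>. \<gamma> \<noteq> \<delta> \<longrightarrow>
              \<not> (\<exists>X. kappa_Baire r X \<and> A \<gamma> \<subseteq> X \<and> X \<subseteq> UNIV - A \<delta>))"
proof (intro exI[of _ "\<lambda>\<gamma>. range (fg \<gamma>)"] conjI allI impI)
  let ?A = "\<lambda>\<gamma>. range (fg \<gamma>)"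
  fix \<gamma> \<delta> :: "'k set" assume "\<gamma> \<noteq> \<delta>"
  then show "?A \<gamma> \<inter> ?A \<delta> = {}" using fg_eq by blast
next
  fix \<gamma> :: "'k set"
  have "inj (fg \<gamma>)" using fg_eq by (meson injI)
  then show "\<exists>f. continuous_map (kappa_top r) (kappa_top r) f \<and> inj f \<and> range (fg \<gamma>) = range f"
    using fg_cont by blast
next
  fix \<gamma> \<delta> :: "'k set" assume "\<gamma> \<noteq> \<delta>"
  show "\<not> (\<exists>X. kappa_Baire r X \<and> range (fg \<gamma>) \<subseteq> X \<and> X \<subseteq> UNIV - range (fg \<delta>))"
  proof
    assume "\<exists>X. kappa_Baire r X \<and> range (fg \<gamma>) \<subseteq> X \<and> X \<subseteq> UNIV - range (fg \<delta>)"
    then obtain X where X: "kappa_Baire r X" "range (fg \<gamma>) \<subseteq> X" "X \<subseteq> UNIV - range (fg \<delta>)" by blast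
    then obtain U N where UN: "openin (kappa_top r) U" "\<forall>\<alpha>::'k. nowhere_dense_in (kappa_top r) (N \<alpha>)"
       "(X - U) \<union> (U - X) \<subseteq> (\<Union>\<alpha>. N \<alpha>)" unfolding kappa_Baire_def by blast
    show False
    proof (cases "U = {}")
      case True
      have "UNIV \<subseteq> (\<Union>\<alpha>. fg \<gamma> -` N \<alpha>)"
      proof
        fix y :: "'k \<Rightarrow> 'k"
        have "fg \<gamma> y \<in> X" using X(2) by blast
        then have "fg \<gamma> y \<in> (\<Union>\<alpha>. N \<alpha>)" using UN(3) True by blast
        then show "y \<in> (\<Union>\<alpha>. fg \<gamma> -` N \<alpha>)" by blast
      qed
      moreover have "openin (kappa_top r) UNIV" using openin_topspace[of "kappa_top r"] by simp
      ultimately show False using baire_open[of UNIV "\<lambda>\<alpha>. fg \<gamma> -` N \<alpha>"] nd_preimage UN(2) by blast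
    next
      case False
      then obtain x where "x \<in> U" by blast
      then obtain b where b: "bn b x \<subseteq> U" using UN(1) open_iff by blast
      have "x \<in> bn (ST x zero) (fg \<delta> x)" using bn_zero ST_zero by simp
      then obtain y where "fg \<delta> y \<in> bn b x" using density[where ii=zero and x=x and yy=x and \<gamma>=\<delta> and b=b, OF not_lim_zero] by blast
      then have ne: "fg \<delta> -` U \<noteq> {}" using b by blast
      have "fg \<delta> -` U \<subseteq> (\<Union>\<alpha>. fg \<delta> -` N \<alpha>)"
      proof
        fix v assume "v \<in> fg \<delta> -` U"
        then have "fg \<delta> v \<in> U" "fg \<delta> v \<notin> X" using X(3) by auto
        then have "fg \<delta> v \<in> (\<Union>\<alpha>. N \<alpha>)" using UN(3) by blast
        then show "v \<in> (\<Union>\<alpha>. fg \<delta> -` N \<alpha>)" by blast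
      qed
      then show False using baire_open[of "fg \<delta> -` U" "\<lambda>\<alpha>. fg \<delta> -` N \<alpha>"] preimage_open[OF UN(1)] ne nd_preimage UN(2) by blast
    qed
  qed
qed

end

theorem theorem1p8:
  fixes r :: "'k rel"
  assumes "card_order r"
    and "\<not> countable (UNIV :: 'k set)"
    and "(card_of (SIGMA \<alpha>:(UNIV::'k set). underS r \<alpha> \<rightarrow>\<^sub>E (UNIV :: 'k set)), r) \<in> ordIso"
  shows "\<exists>A :: 'k set \<Rightarrow> ('k \<Rightarrow> 'k) set.
           (\<forall>\<gamma> \<delta>. \<gamma> \<noteq> \<delta> \<longrightarrow> A \<gamma> \<inter> A \<delta> = {})
         \<and> (\<forall>\<gamma>. \<exists>f. continuous_map (kappa_top r) (kappa_top r) f \<and> inj f \<and> A \<gamma> = range f)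
         \<and> (\<forall>\<gamma> \<delta>. \<gamma> \<noteq> \<delta> \<longrightarrow>
              \<not> (\<exists>X. kappa_Baire r X \<and> A \<gamma> \<subseteq> X \<and> X \<subseteq> UNIV - A \<delta>))"
proof -
  interpret KS r using assms by (unfold_locales) auto
  show ?thesis by (rule main)
qed

end
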